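(* Let $X=\ell_p$ for some $1\le p<\infty$, or $X=c_0$, considered as a Banach algebra under coordinatewise multiplication. Let $x_0\in X$, $m\in\mathbb N$, and $\lambda\in\mathbb C$ with $|\lambda|>1$. If $x_0^m$ is frequently hypercyclic for $\lambda B$, then so is $\sum_{\nu=m}^N\alpha_\nu x_0^\nu$ for any $N\ge m$ and any $\alpha_m,\ldots,\alpha_N\in\mathbb C$ with $\alpha_m\ne0$.
   Context: $\lambda B(x(1),x(2),x(3),\ldots)=(\lambda x(2),\lambda x(3),\ldots)$; powers are coordinatewise. A vector $x$ is frequently hypercyclic for $T$ if for every non-empty open $U\subset X$ the set $\{n\in\mathbb N_0:T^nx\in U\}$ has positive lower density, where the lower density of $A\subset\mathbb N_0$ is $\liminf_{N\to\infty}\frac{\mathrm{card}(A\cap[0,N])}{N+1}$. *)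

theory Defs
  imports "HOL-Analysis.Analysis" "HOL-Library.Extended_Real"
begin

text \<open>Sequence spaces of complex sequences indexed by nat (coordinates x(1),x(2),... are x 0, x 1, ...).\<close>

definition lp_space :: "real \<Rightarrow> (nat \<Rightarrow> complex) set" where
  "lp_space p = {x. summable (\<lambda>n. cmod (x n) powr p)}"

definition lp_dist :: "real \<Rightarrow> (nat \<Rightarrow> complex) \<Rightarrow> (nat \<Rightarrow> complex) \<Rightarrow> real" where
  "lp_dist p x y = (\<Sum>n. cmod (x n - y n) powr p) powr (1 / p)"

definition c0_space :: "(nat \<Rightarrow> complex) set" where
  "c0_space = {x. x \<longlonglongrightarrow> 0}"

definition c0_dist :: "(nat \<Rightarrow> complex) \<Rightarrow> (nat \<Rightarrow> complex) \<Rightarrow> real" where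
  "c0_dist x y = (SUP n. cmod (x n - y n))"

definition open_in_metric :: "'a set \<Rightarrow> ('a \<Rightarrow> 'a \<Rightarrow> real) \<Rightarrow> 'a set \<Rightarrow> bool" where
  "open_in_metric X d U \<longleftrightarrow> U \<subseteq> X \<and> (\<forall>y\<in>U. \<exists>e>0. \<forall>z\<in>X. d y z < e \<longrightarrow> z \<in> U)"

definition lower_density :: "nat set \<Rightarrow> ereal" where
  "lower_density A = liminf (\<lambda>N. ereal (real (card (A \<inter> {0..N})) / real (N + 1)))"

definition freq_hypercyclic ::
  "'a set \<Rightarrow> ('a \<Rightarrow> 'a \<Rightarrow> real) \<Rightarrow> ('a \<Rightarrow> 'a) \<Rightarrow> 'a \<Rightarrow> bool" where
  "freq_hypercyclic X d T x \<longleftrightarrow> x \<in> X \<and>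
     (\<forall>U. open_in_metric X d U \<and> U \<noteq> {} \<longrightarrow> lower_density {n. (T ^^ n) x \<in> U} > 0)"

definition scaled_shift :: "complex \<Rightarrow> (nat \<Rightarrow> complex) \<Rightarrow> (nat \<Rightarrow> complex)" where
  "scaled_shift c x = (\<lambda>n. c * x (Suc n))"

end

theory Submission
  imports Defs "HOL-Real_Asymp.Real_Asymp"
begin


lemma density_lemma:
  assumes sub: "A \<inter> {n0..} \<subseteq> B" and pos: "lower_density A > 0"
  shows "lower_density B > 0"
proof -
  define f where "f = (\<lambda>N. ereal (real (card (A \<inter> {0..N})) / real (N + 1)))"
  define g where "g = (\<lambda>N. ereal (real (card (B \<inter> {0..N})) / real (N + 1)))"
  have lf: "0 < liminf f" using pos unfolding lower_density_def f_def by simp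
  obtain r :: real where r: "0 < r" "ereal r < liminf f"
  proof (cases "liminf f")
    case (real r') then show ?thesis using that[of "r'/2"] lf by auto
  next
    case PInf then show ?thesis using that[of 1] by auto
  next
    case MInf then show ?thesis using lf by auto
  qed
  have ev1: "eventually (\<lambda>N. ereal r < f N) sequentially" using less_LiminfD[OF r(2)] by simp
  have lim0: "(\<lambda>N. real n0 / real (N + 1)) \<longlonglongrightarrow> 0"
    by real_asymp
  then have ev2: "eventually (\<lambda>N. real n0 / real (N + 1) < r / 2) sequentially"
    using r(1) order_tendsto_iff[THEN iffD1, OF lim0] by (meson half_gt_zero)
  have "eventually (\<lambda>N. ereal (r/2) \<le> g N) sequentially"
    using ev1 ev2
  proof eventually_elim
    case (elim N)
    have "A \<inter> {0..N} \<subseteq> (B \<inter> {0..N}) \<union> {..<n0}" using sub by auto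
    then have "card (A \<inter> {0..N}) \<le> card ((B \<inter> {0..N}) \<union> {..<n0})"
      by (intro card_mono) auto
    also have "\<dots> \<le> card (B \<inter> {0..N}) + n0"
      using card_Un_le[of "B \<inter> {0..N}" "{..<n0}"] by simp
    finally have c: "real (card (A \<inter> {0..N})) \<le> real (card (B \<inter> {0..N})) + real n0" by linarith
    have "r < real (card (A \<inter> {0..N})) / real (N + 1)" using elim(1) by (simp add: f_def)
    also have "\<dots> \<le> (real (card (B \<inter> {0..N})) + real n0) / real (N + 1)"
      using c by (intro divide_right_mono) auto
    also have "\<dots> = real (card (B \<inter> {0..N})) / real (N + 1) + real n0 / real (N + 1)"
      by (simp add: add_divide_distrib)
    finally have "r < real (card (B \<inter> {0..N})) / real (N + 1) + real n0 / real (N + 1)" .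
    then have "r / 2 \<le> real (card (B \<inter> {0..N})) / real (N + 1)" using elim(2) by linarith
    then show ?case by (simp add: g_def)
  qed
  then have "ereal (r/2) \<le> liminf g" by (rule Liminf_bounded)
  then show ?thesis using r(1) unfolding lower_density_def g_def[symmetric]
    by (meson ereal_less(2) half_gt_zero less_le_trans)
qed

lemma iter_shift: "(scaled_shift c ^^ n) x = (\<lambda>k. c ^ n * x (n + k))"
  by (induction n) (auto simp: scaled_shift_def)



lemma coord_bound:
  fixes x0 :: "nat \<Rightarrow> complex" and \<alpha> :: "nat \<Rightarrow> complex"
  assumes "m \<le> N"
  shows "cmod ((\<Sum>\<nu>=m..N. \<alpha> \<nu> * x0 j ^ \<nu>) - \<alpha> m * x0 j ^ m)
           \<le> cmod (x0 j ^ m) * (\<Sum>\<nu>\<in>{m<..N}. cmod (\<alpha> \<nu>) * cmod (x0 j) ^ (\<nu> - m))"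
proof -
  have "{m..N} = insert m {m<..N}" using assms by auto
  then have "(\<Sum>\<nu>=m..N. \<alpha> \<nu> * x0 j ^ \<nu>) = \<alpha> m * x0 j ^ m + (\<Sum>\<nu>\<in>{m<..N}. \<alpha> \<nu> * x0 j ^ \<nu>)"
    by simp
  moreover have "(\<Sum>\<nu>\<in>{m<..N}. \<alpha> \<nu> * x0 j ^ \<nu>) = x0 j ^ m * (\<Sum>\<nu>\<in>{m<..N}. \<alpha> \<nu> * x0 j ^ (\<nu> - m))"
    unfolding sum_distrib_left
  proof (rule sum.cong)
    fix \<nu> assume "\<nu> \<in> {m<..N}"
    then have "\<nu> = m + (\<nu> - m)" by auto
    then have "x0 j ^ \<nu> = x0 j ^ m * x0 j ^ (\<nu> - m)" by (metis power_add)
    then show "\<alpha> \<nu> * x0 j ^ \<nu> = x0 j ^ m * (\<alpha> \<nu> * x0 j ^ (\<nu> - m))" by simp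
  qed simp
  ultimately have "(\<Sum>\<nu>=m..N. \<alpha> \<nu> * x0 j ^ \<nu>) - \<alpha> m * x0 j ^ m = x0 j ^ m * (\<Sum>\<nu>\<in>{m<..N}. \<alpha> \<nu> * x0 j ^ (\<nu> - m))"
    by simp
  then have "cmod ((\<Sum>\<nu>=m..N. \<alpha> \<nu> * x0 j ^ \<nu>) - \<alpha> m * x0 j ^ m) = cmod (x0 j ^ m) * cmod (\<Sum>\<nu>\<in>{m<..N}. \<alpha> \<nu> * x0 j ^ (\<nu> - m))"
    by (simp add: norm_mult)
  also have "\<dots> \<le> cmod (x0 j ^ m) * (\<Sum>\<nu>\<in>{m<..N}. cmod (\<alpha> \<nu>) * cmod (x0 j) ^ (\<nu> - m))"
    by (intro mult_left_mono order.trans[OF norm_sum]) (auto simp: norm_mult norm_power)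
  finally show ?thesis .
qed

lemma abstract_main:
  fixes X :: "(nat \<Rightarrow> complex) set" and nrm :: "(nat \<Rightarrow> complex) \<Rightarrow> real"
    and d :: "(nat \<Rightarrow> complex) \<Rightarrow> (nat \<Rightarrow> complex) \<Rightarrow> real"
    and x0 :: "nat \<Rightarrow> complex" and m N :: nat and c :: complex and \<alpha> :: "nat \<Rightarrow> complex"
  assumes zeroX: "(\<lambda>k. 0) \<in> X"
    and addX: "\<And>x y. x \<in> X \<Longrightarrow> y \<in> X \<Longrightarrow> (\<lambda>k. x k + y k) \<in> X"
    and smulX: "\<And>a x. x \<in> X \<Longrightarrow> (\<lambda>k. a * x k) \<in> X"
    and dom: "\<And>x y. y \<in> X \<Longrightarrow> (\<And>k. cmod (x k) \<le> cmod (y k)) \<Longrightarrow> x \<in> X \<and> nrm x \<le> nrm y"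
    and tri: "\<And>x y. x \<in> X \<Longrightarrow> y \<in> X \<Longrightarrow> nrm (\<lambda>k. x k + y k) \<le> nrm x + nrm y"
    and hom: "\<And>a x. x \<in> X \<Longrightarrow> nrm (\<lambda>k. a * x k) = cmod a * nrm x"
    and nn: "\<And>x. x \<in> X \<Longrightarrow> nrm x \<ge> 0"
    and lim: "\<And>x. x \<in> X \<Longrightarrow> x \<longlonglongrightarrow> 0"
    and dd: "d = (\<lambda>x y. nrm (\<lambda>k. x k - y k))"
    and x0X: "x0 \<in> X"
    and fhc: "freq_hypercyclic X d (scaled_shift c) (\<lambda>k. x0 k ^ m)"
    and N: "N \<ge> m"
    and am: "\<alpha> m \<noteq> 0"
  shows "freq_hypercyclic X d (scaled_shift c) (\<lambda>k. \<Sum>\<nu>=m..N. \<alpha> \<nu> * x0 k ^ \<nu>)"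
proof -
  define y where "y = (\<lambda>k. x0 k ^ m)"
  define z where "z = (\<lambda>k. \<Sum>\<nu>=m..N. \<alpha> \<nu> * x0 k ^ \<nu>)"
  define T where "T = scaled_shift c"
  define S where "S = (\<lambda>j. \<Sum>\<nu>\<in>{m<..N}. cmod (\<alpha> \<nu>) * cmod (x0 j) ^ (\<nu> - m))"
  have yX: "y \<in> X" and fy: "\<And>U. open_in_metric X d U \<Longrightarrow> U \<noteq> {} \<Longrightarrow> lower_density {n. (T ^^ n) y \<in> U} > 0"
    using fhc unfolding freq_hypercyclic_def y_def T_def by auto
  have cb: "cmod (z j - \<alpha> m * y j) \<le> cmod (y j) * S j" for j
    unfolding z_def y_def S_def using coord_bound[OF N] by blast
  have subX: "(\<lambda>k. x k - w k) \<in> X" if "x \<in> X" "w \<in> X" for x w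
    using addX[OF that(1) smulX[OF that(2), of "-1"]] by simp
  have symm: "nrm (\<lambda>k. x k - w k) = nrm (\<lambda>k. w k - x k)" if "x \<in> X" "w \<in> X" for x w
    using dom[OF subX[OF that], of "\<lambda>k. w k - x k"] dom[OF subX[OF that(2,1)], of "\<lambda>k. x k - w k"]
    by (simp add: norm_minus_commute)
  have absX: "(\<lambda>k. complex_of_real (cmod (x k))) \<in> X \<and> nrm (\<lambda>k. complex_of_real (cmod (x k))) \<le> nrm x"
    if "x \<in> X" for x
    using dom[OF that, of "\<lambda>k. complex_of_real (cmod (x k))"] by simp
  have nrm0: "nrm (\<lambda>k. 0) = 0" using hom[OF zeroX, of 0] by simp
  obtain M where M: "\<And>j. cmod (x0 j) \<le> M"
    using convergent_imp_Bseq[OF convergentI[OF lim[OF x0X]]] unfolding Bseq_def by auto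
  define M1 where "M1 = max 1 M"
  define C where "C = cmod (\<alpha> m) + (\<Sum>\<nu>\<in>{m<..N}. cmod (\<alpha> \<nu>) * M1 ^ (\<nu> - m))"
  have SC: "S j \<le> C - cmod (\<alpha> m)" for j
    unfolding S_def C_def
    by (auto intro!: sum_mono mult_left_mono power_mono simp: M1_def intro: order.trans[OF M])
  have zX: "z \<in> X"
  proof -
    have "cmod (z j) \<le> cmod (complex_of_real C * y j)" for j
    proof -
      have "cmod (z j) \<le> cmod (\<alpha> m * y j) + cmod (z j - \<alpha> m * y j)"
        by (metis add.commute diff_add_cancel norm_triangle_ineq)
      also have "\<dots> \<le> cmod (\<alpha> m) * cmod (y j) + cmod (y j) * (C - cmod (\<alpha> m))"
        using cb[of j] SC[of j] by (simp add: norm_mult) (meson mult_left_mono norm_ge_zero order.trans)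
      also have "\<dots> = C * cmod (y j)" by (simp add: algebra_simps)
      also have "\<dots> = cmod (complex_of_real C * y j)"
        using SC[of 0] by (simp add: norm_mult) (smt (verit, ccfv_threshold) S_def norm_ge_zero sum_nonneg zero_le_mult_iff zero_le_power)
      finally show ?thesis .
    qed
    then show ?thesis using dom[OF smulX[OF yX]] by blast
  qed
  show ?thesis
    unfolding freq_hypercyclic_def T_def[symmetric] z_def[symmetric]
  proof (intro conjI zX allI impI)
    fix U assume U: "open_in_metric X d U \<and> U \<noteq> {}"
    then obtain u where uU: "u \<in> U" by auto
    with U obtain e where e: "e > 0" "\<And>w. w \<in> X \<Longrightarrow> d u w < e \<Longrightarrow> w \<in> U" and uX: "u \<in> X"
      unfolding open_in_metric_def by blast
    define v where "v = (\<lambda>k. (1 / \<alpha> m) * u k)"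
    have vX: "v \<in> X" unfolding v_def using smulX[OF uX] .
    define \<delta> where "\<delta> = e / (2 * cmod (\<alpha> m))"
    have \<delta>: "\<delta> > 0" using e am by (simp add: \<delta>_def)
    define V where "V = {w \<in> X. d v w < \<delta>}"
    have "open_in_metric X d V"
      unfolding open_in_metric_def
    proof (intro conjI ballI)
      show "V \<subseteq> X" by (auto simp: V_def)
      fix w assume w: "w \<in> V"
      show "\<exists>e>0. \<forall>z\<in>X. d w z < e \<longrightarrow> z \<in> V"
      proof (intro exI[of _ "\<delta> - d v w"] conjI ballI impI)
        show "\<delta> - d v w > 0" using w by (simp add: V_def)
        fix z assume zX': "z \<in> X" and dz: "d w z < \<delta> - d v w"
        have wX: "w \<in> X" using w by (simp add: V_def)
        have "d v z = nrm (\<lambda>k. (v k - w k) + (w k - z k))" by (simp add: dd)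
        also have "\<dots> \<le> d v w + d w z" unfolding dd using tri[OF subX[OF vX wX] subX[OF wX zX']] by simp
        finally show "z \<in> V" using dz zX' by (simp add: V_def)
      qed
    qed
    moreover have "V \<noteq> {}" using vX \<delta> nrm0 by (auto simp: V_def dd intro!: exI[of _ v])
    ultimately have LD: "lower_density {n. (T ^^ n) y \<in> V} > 0" using fy by blast
    define K where "K = (\<Sum>\<nu>\<in>{m<..N}. cmod (\<alpha> \<nu>))"
    have K0: "K \<ge> 0" unfolding K_def by (simp add: sum_nonneg)
    define R where "R = nrm v + \<delta>"
    have R0: "R \<ge> 0" using nn[OF vX] \<delta> by (simp add: R_def)
    define \<epsilon> where "\<epsilon> = min 1 (e / (2 * (K + 1) * (R + 1)))"
    have \<epsilon>0: "\<epsilon> > 0" using e K0 R0 by (simp add: \<epsilon>_def)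
    have \<epsilon>1: "\<epsilon> \<le> 1" by (simp add: \<epsilon>_def)
    have \<epsilon>KR: "\<epsilon> * K * R \<le> e / 2"
    proof -
      have "\<epsilon> * K * R \<le> \<epsilon> * (K + 1) * (R + 1)"
        using \<epsilon>0 K0 R0 by (intro mult_mono) auto
      also have "\<dots> \<le> (e / (2 * (K + 1) * (R + 1))) * (K + 1) * (R + 1)"
        using K0 R0 by (intro mult_right_mono) (auto simp: \<epsilon>_def)
      also have "\<dots> = e / 2"
      proof -
        have "(K + 1) * (R + 1) > 0" using K0 R0 by simp
        then show ?thesis by (simp add: field_simps)
      qed
      finally show ?thesis .
    qed
    obtain n0 where n0: "\<And>j. j \<ge> n0 \<Longrightarrow> cmod (x0 j) < \<epsilon>"
      using lim[OF x0X] \<epsilon>0 unfolding LIMSEQ_def by (auto simp: dist_norm)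
    have Sbound: "S j \<le> \<epsilon> * K" if "j \<ge> n0" for j
    proof -
      have "S j \<le> (\<Sum>\<nu>\<in>{m<..N}. cmod (\<alpha> \<nu>) * \<epsilon>)"
        unfolding S_def
      proof (intro sum_mono mult_left_mono)
        fix \<nu> assume "\<nu> \<in> {m<..N}"
        then have "\<nu> - m \<ge> 1" by auto
        have le1: "cmod (x0 j) \<le> 1" using n0[OF that] \<epsilon>1 by simp
        have "cmod (x0 j) ^ (\<nu> - m) \<le> cmod (x0 j) ^ 1"
          using power_decreasing[OF \<open>\<nu> - m \<ge> 1\<close> _ le1] by simp
        then show "cmod (x0 j) ^ (\<nu> - m) \<le> \<epsilon>" using n0[OF that] by simp
      qed simp
      also have "\<dots> = \<epsilon> * K" by (simp add: K_def sum_distrib_left mult.commute)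
      finally show ?thesis .
    qed
    have "{n. (T ^^ n) y \<in> V} \<inter> {n0..} \<subseteq> {n. (T ^^ n) z \<in> U}"
    proof
      fix n assume an: "n \<in> {n. (T ^^ n) y \<in> V} \<inter> {n0..}"
      then have a: "(T ^^ n) y \<in> V" and nn0: "n \<in> {n0..}" by auto
      define a where "a = (T ^^ n) y"
      define b where "b = (T ^^ n) z"
      have aX: "a \<in> X" and da: "d v a < \<delta>" using a by (auto simp: a_def V_def)
      have bk: "cmod (b k - \<alpha> m * a k) \<le> cmod (a k) * (\<epsilon> * K)" for k
      proof -
        have "b k - \<alpha> m * a k = c ^ n * (z (n + k) - \<alpha> m * y (n + k))"
          by (simp add: a_def b_def T_def iter_shift algebra_simps)
        then have "cmod (b k - \<alpha> m * a k) = cmod (c ^ n) * cmod (z (n + k) - \<alpha> m * y (n + k))"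
          by (simp add: norm_mult)
        also have "\<dots> \<le> cmod (c ^ n) * (cmod (y (n + k)) * S (n + k))"
          by (intro mult_left_mono cb) auto
        also have "\<dots> = cmod (a k) * S (n + k)"
          by (simp add: a_def T_def iter_shift norm_mult)
        also have "\<dots> \<le> cmod (a k) * (\<epsilon> * K)"
          using Sbound[of "n + k"] nn0 by (intro mult_left_mono) auto
        finally show ?thesis .
      qed
      define r where "r = (\<lambda>k. \<alpha> m * (a k - v k))"
      define s where "s = (\<lambda>k. complex_of_real (\<epsilon> * K) * a k)"
      have rX: "r \<in> X" unfolding r_def using smulX[OF subX[OF aX vX]] .
      have sX: "s \<in> X" unfolding s_def using smulX[OF aX] .
      define q where "q = (\<lambda>k. complex_of_real (cmod (r k)) + complex_of_real (cmod (s k)))"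
      have qX: "q \<in> X" and nq: "nrm q \<le> nrm r + nrm s"
      proof -
        show "q \<in> X" unfolding q_def using addX absX rX sX by blast
        have "nrm q \<le> nrm (\<lambda>k. complex_of_real (cmod (r k))) + nrm (\<lambda>k. complex_of_real (cmod (s k)))"
          unfolding q_def using tri absX rX sX by blast
        then show "nrm q \<le> nrm r + nrm s" using absX[OF rX] absX[OF sX] by linarith
      qed
      define w where "w = (\<lambda>k. b k - u k)"
      have wk: "cmod (w k) \<le> cmod (q k)" for k
      proof -
        have uk: "u k = \<alpha> m * v k" using am by (simp add: v_def)
        have "w k = r k + (b k - \<alpha> m * a k)" by (simp add: w_def r_def uk algebra_simps)
        then have "cmod (w k) \<le> cmod (r k) + cmod (b k - \<alpha> m * a k)"
          by (simp add: norm_triangle_ineq)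
        also have "\<dots> \<le> cmod (r k) + cmod (s k)"
          using bk[of k] K0 \<epsilon>0 by (simp add: s_def norm_mult abs_mult mult.commute)
        also have "\<dots> = cmod (q k)" by (simp add: q_def flip: of_real_add)
        finally show ?thesis .
      qed
      from dom[OF qX, of w] wk have wX: "w \<in> X" and nw: "nrm w \<le> nrm q" by auto
      have nr: "nrm r < e / 2"
      proof -
        have "nrm r = cmod (\<alpha> m) * nrm (\<lambda>k. a k - v k)" unfolding r_def using hom subX aX vX by blast
        also have "nrm (\<lambda>k. a k - v k) = d v a" using symm[OF vX aX] by (simp add: dd)
        finally have "nrm r = cmod (\<alpha> m) * d v a" .
        also have "\<dots> < cmod (\<alpha> m) * \<delta>" using da am by simp
        also have "\<dots> = e / 2" using am by (simp add: \<delta>_def)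
        finally show ?thesis .
      qed
      have na: "nrm a \<le> R"
      proof -
        have "nrm a = nrm (\<lambda>k. v k + (a k - v k))" by simp
        also have "\<dots> \<le> nrm v + nrm (\<lambda>k. a k - v k)" using tri vX subX[OF aX vX] by blast
        also have "nrm (\<lambda>k. a k - v k) = d v a" using symm[OF vX aX] by (simp add: dd)
        finally show ?thesis using da by (simp add: R_def)
      qed
      have ns: "nrm s \<le> e / 2"
      proof -
        have "nrm s = \<epsilon> * K * nrm a" unfolding s_def using hom[OF aX, of "complex_of_real (\<epsilon> * K)"] K0 \<epsilon>0 by (simp only: norm_of_real) simp
        also have "\<dots> \<le> \<epsilon> * K * R" using na K0 \<epsilon>0 by (intro mult_left_mono) auto
        finally show ?thesis using \<epsilon>KR by linarith
      qed
      have bX: "b \<in> X"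
      proof -
        have "b = (\<lambda>k. u k + w k)" by (simp add: w_def)
        then show ?thesis using addX uX wX by simp
      qed
      have "d u b = nrm (\<lambda>k. b k - u k)" using symm[OF uX bX] by (simp add: dd)
      also have "\<dots> = nrm w" by (simp add: w_def)
      finally have "d u b < e" using nw nq nr ns by linarith
      then have "b \<in> U" using e(2) bX by blast
      then show "n \<in> {n. (T ^^ n) z \<in> U}" by (simp add: b_def)
    qed
    then show "lower_density {n. (T ^^ n) z \<in> U} > 0"
      using density_lemma LD by blast
  qed
qed



definition c0n :: "(nat \<Rightarrow> complex) \<Rightarrow> real" where "c0n x = (SUP n. cmod (x n))"

lemma c0_bdd: "x \<in> c0_space \<Longrightarrow> bdd_above (range (\<lambda>n. cmod (x n)))"
proof -
  assume "x \<in> c0_space"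
  then obtain K where "\<forall>n. cmod (x n) \<le> K"
    using convergent_imp_Bseq[OF convergentI, of x 0] unfolding Bseq_def c0_space_def by auto
  then show ?thesis by (auto simp: bdd_above_def)
qed

lemma c0_dom:
  assumes "y \<in> c0_space" "\<And>k. cmod (x k) \<le> cmod (y k)"
  shows "x \<in> c0_space \<and> c0n x \<le> c0n y"
proof
  show "x \<in> c0_space" using assms unfolding c0_space_def
    using Lim_null_comparison[of x "\<lambda>k. cmod (y k)" sequentially]
    by (simp add: tendsto_norm_zero)
  show "c0n x \<le> c0n y" unfolding c0n_def
    using assms by (intro cSUP_mono c0_bdd) auto
qed

lemma c0_tri:
  assumes "x \<in> c0_space" "y \<in> c0_space"
  shows "c0n (\<lambda>k. x k + y k) \<le> c0n x + c0n y"
  unfolding c0n_def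
proof (rule cSUP_least)
  fix n
  have "cmod (x n + y n) \<le> cmod (x n) + cmod (y n)" by (rule norm_triangle_ineq)
  also have "\<dots> \<le> (SUP n. cmod (x n)) + (SUP n. cmod (y n))"
    using assms by (intro add_mono cSUP_upper c0_bdd) auto
  finally show "cmod (x n + y n) \<le> (SUP n. cmod (x n)) + (SUP n. cmod (y n))" .
qed simp

lemma c0_nn: "x \<in> c0_space \<Longrightarrow> c0n x \<ge> 0"
  unfolding c0n_def by (rule cSUP_upper2[OF c0_bdd, of x 0]) auto

lemma c0_smul: "x \<in> c0_space \<Longrightarrow> (\<lambda>k. a * x k) \<in> c0_space"
  unfolding c0_space_def using tendsto_mult_right_zero by blast

lemma c0_hom:
  assumes x: "x \<in> c0_space"
  shows "c0n (\<lambda>k. a * x k) = cmod a * c0n x"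
proof (cases "a = 0")
  case True then show ?thesis by (simp add: c0n_def)
next
  case False
  have ax: "(\<lambda>k. a * x k) \<in> c0_space" using c0_smul[OF x] .
  show ?thesis
  proof (rule antisym)
    show "c0n (\<lambda>k. a * x k) \<le> cmod a * c0n x" unfolding c0n_def
    proof (rule cSUP_least)
      fix n show "cmod (a * x n) \<le> cmod a * (SUP n. cmod (x n))"
        by (simp add: norm_mult) (intro mult_left_mono cSUP_upper c0_bdd x, auto)
    qed simp
    have "c0n x \<le> c0n (\<lambda>k. a * x k) / cmod a" unfolding c0n_def
    proof (rule cSUP_least)
      fix n
      have "cmod (a * x n) \<le> (SUP n. cmod (a * x n))"
        by (intro cSUP_upper c0_bdd ax) auto
      then show "cmod (x n) \<le> (SUP n. cmod (a * x n)) / cmod a"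
        using False by (simp add: norm_mult field_simps)
    qed simp
    then show "cmod a * c0n x \<le> c0n (\<lambda>k. a * x k)"
      using False by (simp add: field_simps)
  qed
qed

lemma c0_case:
  fixes x0 :: "nat \<Rightarrow> complex" and m N :: nat and c :: complex and \<alpha> :: "nat \<Rightarrow> complex"
  assumes x0X: "x0 \<in> c0_space"
    and fhc: "freq_hypercyclic c0_space c0_dist (scaled_shift c) (\<lambda>k. x0 k ^ m)"
    and N: "N \<ge> m" and am: "\<alpha> m \<noteq> 0"
  shows "freq_hypercyclic c0_space c0_dist (scaled_shift c) (\<lambda>k. \<Sum>\<nu>=m..N. \<alpha> \<nu> * x0 k ^ \<nu>)"
proof (rule abstract_main[where nrm = c0n and X = c0_space and d = c0_dist])
  show "x0 \<in> c0_space" by fact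
  show "freq_hypercyclic c0_space c0_dist (scaled_shift c) (\<lambda>k. x0 k ^ m)" by fact
  show "m \<le> N" by fact
  show "\<alpha> m \<noteq> 0" by fact
  show "(\<lambda>k. 0) \<in> c0_space" by (simp add: c0_space_def)
  show "\<And>x y. x \<in> c0_space \<Longrightarrow> y \<in> c0_space \<Longrightarrow> (\<lambda>k. x k + y k) \<in> c0_space"
    unfolding c0_space_def using tendsto_add by fastforce
  show "\<And>a x. x \<in> c0_space \<Longrightarrow> (\<lambda>k. a * x k) \<in> c0_space" by (rule c0_smul)
  show "\<And>x y. y \<in> c0_space \<Longrightarrow> (\<And>k. cmod (x k) \<le> cmod (y k)) \<Longrightarrow> x \<in> c0_space \<and> c0n x \<le> c0n y"
    by (rule c0_dom)
  show "\<And>x y. x \<in> c0_space \<Longrightarrow> y \<in> c0_space \<Longrightarrow> c0n (\<lambda>k. x k + y k) \<le> c0n x + c0n y"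
    by (rule c0_tri)
  show "\<And>a x. x \<in> c0_space \<Longrightarrow> c0n (\<lambda>k. a * x k) = cmod a * c0n x" by (rule c0_hom)
  show "\<And>x. x \<in> c0_space \<Longrightarrow> c0n x \<ge> 0" by (rule c0_nn)
  show "\<And>x. x \<in> c0_space \<Longrightarrow> x \<longlonglongrightarrow> 0" by (simp add: c0_space_def)
  show "c0_dist = (\<lambda>x y. c0n (\<lambda>k. x k - y k))" by (simp add: c0_dist_def c0n_def fun_eq_iff)
qed



lemma powr_cvx:
  fixes t u w p :: real
  assumes "0 \<le> t" "t \<le> 1" "0 \<le> u" "0 \<le> w" "1 \<le> p"
  shows "(t * u + (1 - t) * w) powr p \<le> t * u powr p + (1 - t) * w powr p"
proof -
  have sm: "s powr p \<le> s" if "0 \<le> s" "s \<le> 1" for s :: real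
  proof (cases "s = 0")
    case False
    then have "s powr p \<le> s powr 1" using that assms(5) by (intro powr_mono') auto
    then show ?thesis using that by simp
  qed (simp)
  show ?thesis
  proof (cases "u = 0 \<or> w = 0")
    case True
    then show ?thesis
    proof
      assume "u = 0"
      then have "(t * u + (1 - t) * w) powr p = (1 - t) powr p * w powr p"
        using assms by (simp add: powr_mult)
      also have "\<dots> \<le> (1 - t) * w powr p" using sm[of "1 - t"] assms by (intro mult_right_mono) auto
      finally show ?thesis using \<open>u = 0\<close> assms by simp
    next
      assume "w = 0"
      then have "(t * u + (1 - t) * w) powr p = t powr p * u powr p"
        using assms by (simp add: powr_mult)
      also have "\<dots> \<le> t * u powr p" using sm[of t] assms by (intro mult_right_mono) auto
      finally show ?thesis using \<open>w = 0\<close> assms by simp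
    qed
  next
    case False
    then have "u > 0" "w > 0" using assms by auto
    from convex_onD[OF powr_convex[OF assms(5)], of "1 - t" u w] show ?thesis
      using assms \<open>u > 0\<close> \<open>w > 0\<close> by (simp add: algebra_simps)
  qed
qed

lemma zero_sum_imp:
  assumes "summable (\<lambda>n. cmod (x n) powr p)" "(\<Sum>n. cmod (x n) powr p) = 0"
  shows "x n = 0"
proof -
  have "cmod (x n) powr p = 0" using assms suminf_eq_zero_iff[of "\<lambda>n. cmod (x n) powr p"] by simp
  then show ?thesis by simp
qed

lemma lp_mink:
  fixes x y :: "nat \<Rightarrow> complex" and p :: real
  assumes p: "1 \<le> p" and sx: "summable (\<lambda>n. cmod (x n) powr p)" and sy: "summable (\<lambda>n. cmod (y n) powr p)"
  shows "summable (\<lambda>n. cmod (x n + y n) powr p) \<and>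
    (\<Sum>n. cmod (x n + y n) powr p) powr (1/p) \<le> (\<Sum>n. cmod (x n) powr p) powr (1/p) + (\<Sum>n. cmod (y n) powr p) powr (1/p)"
proof -
  define Sa where "Sa = (\<Sum>n. cmod (x n) powr p)"
  define Sb where "Sb = (\<Sum>n. cmod (y n) powr p)"
  have Sa0: "Sa \<ge> 0" unfolding Sa_def by (intro suminf_nonneg sx) auto
  have Sb0: "Sb \<ge> 0" unfolding Sb_def by (intro suminf_nonneg sy) auto
  show ?thesis
  proof (cases "Sa = 0 \<or> Sb = 0")
    case True
    then show ?thesis
    proof
      assume "Sa = 0"
      then have "x n = 0" for n using zero_sum_imp[OF sx, of n] unfolding Sa_def by blast
      then have "x = (\<lambda>n. 0)" by auto
      then show ?thesis using sy \<open>Sa = 0\<close> by (simp add: Sa_def)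
    next
      assume "Sb = 0"
      then have "y n = 0" for n using zero_sum_imp[OF sy, of n] unfolding Sb_def by blast
      then have "y = (\<lambda>n. 0)" by auto
      then show ?thesis using sx \<open>Sb = 0\<close> by (simp add: Sb_def)
    qed
  next
    case False
    then have Sa1: "Sa > 0" and Sb1: "Sb > 0" using Sa0 Sb0 by auto
    define A where "A = Sa powr (1/p)"
    define B where "B = Sb powr (1/p)"
    have A0: "A > 0" and B0: "B > 0" using Sa1 Sb1 by (auto simp: A_def B_def)
    have Ap: "A powr p = Sa" using Sa1 p by (simp add: A_def powr_powr)
    have Bp: "B powr p = Sb" using Sb1 p by (simp add: B_def powr_powr)
    define t where "t = A / (A + B)"
    have t0: "0 \<le> t" "t \<le> 1" using A0 B0 by (auto simp: t_def)
    have t1: "1 - t = B / (A + B)" using A0 B0 unfolding t_def by (simp add: field_simps)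
    define G where "G = (\<lambda>n. (A + B) powr p * (t / Sa * cmod (x n) powr p + (1 - t) / Sb * cmod (y n) powr p))"
    have bound: "cmod (x n + y n) powr p \<le> G n" for n
    proof -
      define a where "a = cmod (x n)"
      define b where "b = cmod (y n)"
      have a0: "a \<ge> 0" and b0: "b \<ge> 0" by (auto simp: a_def b_def)
      have "cmod (x n + y n) powr p \<le> (a + b) powr p"
        unfolding a_def b_def using p by (intro powr_mono2 norm_triangle_ineq) auto
      also have "a + b = (A + B) * (t * (a / A) + (1 - t) * (b / B))"
      proof -
        have e1: "t * (a / A) = a / (A + B)" using A0 by (simp add: t_def)
        have e2: "(1 - t) * (b / B) = b / (A + B)" using B0 by (simp add: t1)
        have "(A + B) * (a / (A + B) + b / (A + B)) = a + b" using A0 B0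
          by (simp add: add_divide_distrib[symmetric])
        then show ?thesis by (simp only: e1 e2)
      qed
      also have "((A + B) * (t * (a / A) + (1 - t) * (b / B))) powr p
          = (A + B) powr p * (t * (a / A) + (1 - t) * (b / B)) powr p"
        using A0 B0 a0 b0 t0 by (intro powr_mult)
      also have "\<dots> \<le> (A + B) powr p * (t * (a / A) powr p + (1 - t) * (b / B) powr p)"
        using A0 B0 a0 b0 t0 p by (intro mult_left_mono powr_cvx) auto
      also have "\<dots> = G n"
      proof -
        have "(a / A) powr p = a powr p / Sa" using a0 A0 by (simp add: powr_divide Ap)
        moreover have "(b / B) powr p = b powr p / Sb" using b0 B0 by (simp add: powr_divide Bp)
        ultimately show ?thesis by (simp add: G_def a_def b_def)
      qed
      finally show ?thesis .
    qed
    have sG: "(\<lambda>n. t / Sa * cmod (x n) powr p + (1 - t) / Sb * cmod (y n) powr p) sums (t / Sa * Sa + (1 - t) / Sb * Sb)"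
      unfolding Sa_def Sb_def
      by (intro sums_add sums_mult summable_sums sx sy)
    then have sG': "G sums ((A + B) powr p * (t / Sa * Sa + (1 - t) / Sb * Sb))"
      unfolding G_def by (rule sums_mult)
    have val: "(A + B) powr p * (t / Sa * Sa + (1 - t) / Sb * Sb) = (A + B) powr p"
      using Sa1 Sb1 by simp
    have summ: "summable (\<lambda>n. cmod (x n + y n) powr p)"
    proof (rule summable_comparison_test'[of G 0])
      show "summable G" using sG' by (simp add: sums_iff)
      fix n show "norm (cmod (x n + y n) powr p) \<le> G n" using bound[of n] by simp
    qed
    have "(\<Sum>n. cmod (x n + y n) powr p) \<le> (\<Sum>n. G n)"
      by (rule suminf_le[OF bound summ]) (use sG' in \<open>simp add: sums_iff\<close>)
    also have "\<dots> = (A + B) powr p" using sG' val by (simp add: sums_iff)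
    finally have le: "(\<Sum>n. cmod (x n + y n) powr p) \<le> (A + B) powr p" .
    have "(\<Sum>n. cmod (x n + y n) powr p) powr (1/p) \<le> ((A + B) powr p) powr (1/p)"
      using le p by (intro powr_mono2 suminf_nonneg summ) auto
    also have "\<dots> = A + B" using A0 B0 p by (simp add: powr_powr)
    finally show ?thesis using summ by (simp add: A_def B_def Sa_def Sb_def)
  qed
qed



definition lpn :: "real \<Rightarrow> (nat \<Rightarrow> complex) \<Rightarrow> real" where
  "lpn p x = (\<Sum>n. cmod (x n) powr p) powr (1 / p)"

lemma lp_pow_mult: "cmod (a * z) powr p = cmod a powr p * cmod z powr p"
  by (simp add: norm_mult powr_mult)

lemma lp_smul: "x \<in> lp_space p \<Longrightarrow> (\<lambda>k. a * x k) \<in> lp_space p"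
  unfolding lp_space_def by (simp add: lp_pow_mult summable_mult)

lemma lp_hom:
  assumes p: "1 \<le> p" and x: "x \<in> lp_space p"
  shows "lpn p (\<lambda>k. a * x k) = cmod a * lpn p x"
proof -
  have s: "summable (\<lambda>n. cmod (x n) powr p)" using x by (simp add: lp_space_def)
  have "(\<Sum>n. cmod (a * x n) powr p) = cmod a powr p * (\<Sum>n. cmod (x n) powr p)"
    unfolding lp_pow_mult by (rule suminf_mult[OF s])
  then have "lpn p (\<lambda>k. a * x k) = (cmod a powr p * (\<Sum>n. cmod (x n) powr p)) powr (1 / p)"
    by (simp add: lpn_def)
  also have "\<dots> = (cmod a powr p) powr (1 / p) * (\<Sum>n. cmod (x n) powr p) powr (1 / p)"
    using suminf_nonneg[OF s] by (simp add: powr_mult)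
  also have "(cmod a powr p) powr (1 / p) = cmod a"
    using p by (simp add: powr_powr)
  finally show ?thesis by (simp add: lpn_def)
qed

lemma lp_dom:
  assumes p: "1 \<le> p" and y: "y \<in> lp_space p" and le: "\<And>k. cmod (x k) \<le> cmod (y k)"
  shows "x \<in> lp_space p \<and> lpn p x \<le> lpn p y"
proof -
  have sy: "summable (\<lambda>n. cmod (y n) powr p)" using y by (simp add: lp_space_def)
  have b: "cmod (x n) powr p \<le> cmod (y n) powr p" for n
    using le[of n] p by (intro powr_mono2) auto
  have sx: "summable (\<lambda>n. cmod (x n) powr p)"
  proof (rule summable_comparison_test'[of _ 0])
    show "summable (\<lambda>n. cmod (y n) powr p)" by (rule sy)
    fix n show "norm (cmod (x n) powr p) \<le> cmod (y n) powr p" using b[of n] by simp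
  qed
  have "(\<Sum>n. cmod (x n) powr p) \<le> (\<Sum>n. cmod (y n) powr p)"
    by (rule suminf_le[OF b sx sy])
  then have "lpn p x \<le> lpn p y" unfolding lpn_def
    using p by (intro powr_mono2 suminf_nonneg sx) auto
  then show ?thesis using sx by (simp add: lp_space_def)
qed

lemma lp_lim:
  assumes p: "1 \<le> p" and x: "x \<in> lp_space p"
  shows "x \<longlonglongrightarrow> 0"
proof -
  have s: "summable (\<lambda>n. cmod (x n) powr p)" using x by (simp add: lp_space_def)
  have "(\<lambda>n. cmod (x n) powr p) \<longlonglongrightarrow> 0" by (rule summable_LIMSEQ_zero[OF s])
  then have "(\<lambda>n. (cmod (x n) powr p) powr (1 / p)) \<longlonglongrightarrow> 0"
    by (rule tendsto_zero_powrI[OF _ tendsto_const]) (use p in auto)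
  moreover have "(cmod (x n) powr p) powr (1 / p) = cmod (x n)" for n
    using p by (simp add: powr_powr)
  ultimately have "(\<lambda>n. cmod (x n)) \<longlonglongrightarrow> 0" by simp
  then show ?thesis by (simp add: tendsto_norm_zero_iff)
qed

lemma lp_case:
  fixes x0 :: "nat \<Rightarrow> complex" and m N :: nat and c :: complex and \<alpha> :: "nat \<Rightarrow> complex"
  assumes p: "1 \<le> p" and x0X: "x0 \<in> lp_space p"
    and fhc: "freq_hypercyclic (lp_space p) (lp_dist p) (scaled_shift c) (\<lambda>k. x0 k ^ m)"
    and N: "N \<ge> m" and am: "\<alpha> m \<noteq> 0"
  shows "freq_hypercyclic (lp_space p) (lp_dist p) (scaled_shift c) (\<lambda>k. \<Sum>\<nu>=m..N. \<alpha> \<nu> * x0 k ^ \<nu>)"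
proof (rule abstract_main[where nrm = "lpn p" and X = "lp_space p" and d = "lp_dist p"])
  show "x0 \<in> lp_space p" by fact
  show "freq_hypercyclic (lp_space p) (lp_dist p) (scaled_shift c) (\<lambda>k. x0 k ^ m)" by fact
  show "m \<le> N" by fact
  show "\<alpha> m \<noteq> 0" by fact
  show "(\<lambda>k. 0) \<in> lp_space p" by (simp add: lp_space_def)
  show "\<And>x y. x \<in> lp_space p \<Longrightarrow> y \<in> lp_space p \<Longrightarrow> (\<lambda>k. x k + y k) \<in> lp_space p"
    using lp_mink[OF p] by (simp add: lp_space_def)
  show "\<And>a x. x \<in> lp_space p \<Longrightarrow> (\<lambda>k. a * x k) \<in> lp_space p" by (rule lp_smul)
  show "\<And>x y. y \<in> lp_space p \<Longrightarrow> (\<And>k. cmod (x k) \<le> cmod (y k)) \<Longrightarrow> x \<in> lp_space p \<and> lpn p x \<le> lpn p y"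
    by (rule lp_dom[OF p])
  show "\<And>x y. x \<in> lp_space p \<Longrightarrow> y \<in> lp_space p \<Longrightarrow> lpn p (\<lambda>k. x k + y k) \<le> lpn p x + lpn p y"
    using lp_mink[OF p] by (simp add: lp_space_def lpn_def)
  show "\<And>a x. x \<in> lp_space p \<Longrightarrow> lpn p (\<lambda>k. a * x k) = cmod a * lpn p x" by (rule lp_hom[OF p])
  show "\<And>x. x \<in> lp_space p \<Longrightarrow> lpn p x \<ge> 0" by (simp add: lpn_def)
  show "\<And>x. x \<in> lp_space p \<Longrightarrow> x \<longlonglongrightarrow> 0" by (rule lp_lim[OF p])
  show "lp_dist p = (\<lambda>x y. lpn p (\<lambda>k. x k - y k))" by (simp add: lp_dist_def lpn_def fun_eq_iff)
qed


theorem corollary2p3: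
  fixes X :: "(nat \<Rightarrow> complex) set" and d :: "(nat \<Rightarrow> complex) \<Rightarrow> (nat \<Rightarrow> complex) \<Rightarrow> real"
    and x0 :: "nat \<Rightarrow> complex" and m N :: nat and c :: complex and \<alpha> :: "nat \<Rightarrow> complex"
  assumes space: "(\<exists>p::real. 1 \<le> p \<and> X = lp_space p \<and> d = lp_dist p) \<or> (X = c0_space \<and> d = c0_dist)"
    and x0X: "x0 \<in> X"
    and m: "m \<ge> 1"
    and c: "cmod c > 1"
    and fhc: "freq_hypercyclic X d (scaled_shift c) (\<lambda>k. x0 k ^ m)"
    and N: "N \<ge> m"
    and am: "\<alpha> m \<noteq> 0"
  shows "freq_hypercyclic X d (scaled_shift c) (\<lambda>k. \<Sum>\<nu>=m..N. \<alpha> \<nu> * x0 k ^ \<nu>)"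
  using space
proof
  assume "\<exists>p::real. 1 \<le> p \<and> X = lp_space p \<and> d = lp_dist p"
  then obtain p :: real where p: "1 \<le> p" "X = lp_space p" "d = lp_dist p" by blast
  show ?thesis using lp_case[OF p(1), of x0 c m N \<alpha>] x0X fhc N am p by simp
next
  assume "X = c0_space \<and> d = c0_dist"
  then show ?thesis using c0_case[of x0 c m N \<alpha>] x0X fhc N am by simp
qed

end
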